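(* Let $\ell\ge1$, $m\ge0$, positive integers $n_0,\dots,n_m$ with $n:=\sum_{j=0}^m n_j-1\ge1$, and distinct points $z_0=0,z_1,\dots,z_m$ in the open unit disc be given, and let $Z$, $e$ be as below. Let $t_1,\dots,t_\ell$ be positive integers with $t_1+\dots+t_\ell=n\ell$, let $t=\max_i t_i$, and let $V$, $N$ be as below. Then the first $\ell$ rows of the $\ell(n+1)\times\ell n$ matrix $VN$ are zero, so $VN=\begin{bmatrix}0_{\ell\times\ell n}\\ L\end{bmatrix}$ with $L\in\mathbb{C}^{\ell n\times\ell n}$, and $L$ is nonsingular if and only if $t_1=t_2=\dots=t_\ell=n$.
   Context: $Z_j$ is the $n_j\times n_j$ lower bidiagonal matrix with $z_j$ on the diagonal and $1$ on the first subdiagonal, and $Z=\operatorname{diag}(Z_0,\dots,Z_m)\in\mathbb{C}^{(n+1)\times(n+1)}$. $e\in\mathbb{R}^{n+1}$ is the column vector obtained by stacking the vectors $(1,0,\dots,0)'\in\mathbb{R}^{n_j}$, $j=0,\dots,m$. $V=\begin{bmatrix}(Ze)\otimes I_\ell & (Z^2e)\otimes I_\ell&\cdots&(Z^te)\otimes I_\ell\end{bmatrix}\in\mathbb{C}^{\ell(n+1)\times\ell t}$. For $k=1,\dots,t$, $N_k=\operatorname{diag}(e^k_{t_1},\dots,e^k_{t_\ell})\in\mathbb{R}^{\ell\times\ell n}$, where $e^k_{j}\in\mathbb{R}^{1\times j}$ is the row vector whose $k$-th entry is $1$ and other entries $0$ if $k\le j$, and the zero row vector of length $j$ if $k>j$;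 equivalently $\operatorname{diag}(z^{t_1},\dots,z^{t_\ell})\,\operatorname{diag}(\pi_{t_1}(z^{-1}),\dots,\pi_{t_\ell}(z^{-1}))=\sum_{k=1}^t N_k z^k$ with $\pi_\nu(z)=(z^{\nu-1},\dots,z,1)$. $N=\begin{bmatrix}N_1\\ \vdots\\ N_t\end{bmatrix}\in\mathbb{R}^{\ell t\times\ell n}$. $\otimes$ is the Kronecker product. *)

theory Defs
  imports Complex_Main "Jordan_Normal_Form.Matrix"
begin

definition kron :: "'a::times mat \<Rightarrow> 'a mat \<Rightarrow> 'a mat" where
  "kron A B = mat (dim_row A * dim_row B) (dim_col A * dim_col B)
     (\<lambda>(i,j). A $$ (i div dim_row B, j div dim_col B) * B $$ (i mod dim_row B, j mod dim_col B))"

definition Zblock :: "nat \<Rightarrow> complex \<Rightarrow> complex mat" where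
  "Zblock k z = mat k k (\<lambda>(r,c). if r = c then z else if r = c + 1 then 1 else 0)"

definition Zmat :: "nat \<Rightarrow> (nat \<Rightarrow> nat) \<Rightarrow> (nat \<Rightarrow> complex) \<Rightarrow> complex mat" where
  "Zmat m ns zs = diag_block_mat (map (\<lambda>j. Zblock (ns j) (zs j)) [0..<Suc m])"

text \<open>e: stacking of the first unit vectors (1,0,...,0) of length ns j, j = 0..m.\<close>
definition evec :: "nat \<Rightarrow> (nat \<Rightarrow> nat) \<Rightarrow> complex vec" where
  "evec m ns = vec (\<Sum>j\<le>m. ns j)
     (\<lambda>i. if \<exists>j\<le>m. i = (\<Sum>k<j. ns k) then 1 else 0)"

text \<open>V = [ (Ze) \<otimes> I_l, (Z^2 e) \<otimes> I_l, ..., (Z^t e) \<otimes> I_l ]; column c lies in block c div l.\<close>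
definition Vmat :: "nat \<Rightarrow> nat \<Rightarrow> (nat \<Rightarrow> nat) \<Rightarrow> (nat \<Rightarrow> complex) \<Rightarrow> nat \<Rightarrow> complex mat" where
  "Vmat l m ns zs t =
     (let Z = Zmat m ns zs; e = evec m ns; d = dim_vec e in
      mat (l * d) (l * t)
       (\<lambda>(r,c). (kron (mat_of_cols d [(Z ^\<^sub>m (c div l + 1)) *\<^sub>v e]) (1\<^sub>m l)) $$ (r, c mod l)))"

text \<open>N_k = diag(e^k_{t_1},...,e^k_{t_l}) (l x (sum of t_i)); here ts i, i < l, stands for t_(i+1).\<close>
definition Nk :: "nat \<Rightarrow> (nat \<Rightarrow> nat) \<Rightarrow> nat \<Rightarrow> complex mat" where
  "Nk l ts k = mat l (\<Sum>i<l. ts i)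
     (\<lambda>(i,c). if 1 \<le> k \<and> k \<le> ts i \<and> c = (\<Sum>i'<i. ts i') + (k - 1) then 1 else 0)"

definition Nmat :: "nat \<Rightarrow> (nat \<Rightarrow> nat) \<Rightarrow> nat \<Rightarrow> complex mat" where
  "Nmat l ts t = mat (l * t) (\<Sum>i<l. ts i) (\<lambda>(r,c). Nk l ts (r div l + 1) $$ (r mod l, c))"

end

theory Submission imports Defs "Jordan_Normal_Form.Determinant" "HOL-Computational_Algebra.Polynomial_Factorial" "HOL-Computational_Algebra.Field_as_Ring"
begin

lemma invertible_iff_ker:
  fixes A :: "complex mat" assumes A: "A \<in> carrier_mat n n"
  shows "invertible_mat A \<longleftrightarrow> (\<forall>v. v \<in> carrier_vec n \<longrightarrow> A *\<^sub>v v = 0\<^sub>v n \<longrightarrow> v = 0\<^sub>v n)"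
proof
  assume "invertible_mat A"
  then obtain B where B: "B * A = 1\<^sub>m (dim_row B)" "A * B = 1\<^sub>m (dim_row A)"
    unfolding invertible_mat_def inverts_mat_def by auto
  have Bc: "B \<in> carrier_mat n n" using B A
    by (metis carrier_matD carrier_matI index_mult_mat(2,3) index_one_mat(2,3))
  show "\<forall>v. v \<in> carrier_vec n \<longrightarrow> A *\<^sub>v v = 0\<^sub>v n \<longrightarrow> v = 0\<^sub>v n"
  proof (intro allI impI)
    fix v :: "complex vec" assume v: "v \<in> carrier_vec n" and Av: "A *\<^sub>v v = 0\<^sub>v n"
    have "v = (B * A) *\<^sub>v v" using B Bc v by auto
    also have "\<dots> = B *\<^sub>v (A *\<^sub>v v)" using Bc A v by (simp add: assoc_mult_mat_vec)
    also have "\<dots> = 0\<^sub>v n" using Av Bc by auto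
    finally show "v = 0\<^sub>v n" .
  qed
next
  assume k: "\<forall>v. v \<in> carrier_vec n \<longrightarrow> A *\<^sub>v v = 0\<^sub>v n \<longrightarrow> v = 0\<^sub>v n"
  have "det A \<noteq> 0" using det_0_iff_vec_prod_zero_field[OF A] k by auto
  from det_non_zero_imp_unit[OF A this, of "()"]
  obtain B where "B * A = 1\<^sub>m n" "A * B = 1\<^sub>m n" "B \<in> carrier_mat n n"
    unfolding Units_def ring_mat_def by auto
  then show "invertible_mat A" using A unfolding invertible_mat_def inverts_mat_def square_mat.simps
    by auto
qed

lemma block_decomp: "(r::nat) < (\<Sum>k<(M::nat). f k) \<Longrightarrow> \<exists>j<M. \<exists>i<f j. r = (\<Sum>k<j. f k) + i"
proof (induction M)
  case 0 then show ?case by simp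
next
  case (Suc M)
  show ?case
  proof (cases "r < (\<Sum>k<M. f k)")
    case True then show ?thesis using Suc.IH less_Suc_eq by blast
  next
    case False
    then show ?thesis using Suc.prems
      by (intro exI[of _ M]) (auto intro: exI[of _ "r - (\<Sum>k<M. f k)"])
  qed
qed

lemma block_mono: "(j::nat) < j' \<Longrightarrow> (\<Sum>k<j. f k) + f j \<le> (\<Sum>k<j'. (f k::nat))"
proof -
  assume "j < j'"
  then have "(\<Sum>k<j. f k) + f j = (\<Sum>k<Suc j. f k)" by simp
  also have "\<dots> \<le> (\<Sum>k<j'. f k)" using \<open>j < j'\<close> by (intro sum_mono2) auto
  finally show ?thesis .
qed

lemma block_unique: "(\<Sum>k<(j::nat). f k) + i = (\<Sum>k<j'. f k) + i' \<Longrightarrow> i < f j \<Longrightarrow> i' < (f j'::nat)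
  \<Longrightarrow> j = j' \<and> i = i'"
proof -
  assume h: "(\<Sum>k<j. f k) + i = (\<Sum>k<j'. f k) + i'" "i < f j" "i' < f j'"
  have "\<not> j < j'" using block_mono[of j j' f] h by auto
  moreover have "\<not> j' < j" using block_mono[of j' j f] h by auto
  ultimately have "j = j'" by auto
  then show ?thesis using h by auto
qed

lemma diag_block_entry:
  assumes "\<forall>B\<in>set Bs. dim_col B = dim_row B"
  and "j < length Bs" "i < dim_row (Bs!j)" "c < sum_list (map dim_col Bs)"
  shows "diag_block_mat Bs $$ ((\<Sum>k<j. dim_row (Bs!k)) + i, c) =
    (if (\<Sum>k<j. dim_row (Bs!k)) \<le> c \<and> c < (\<Sum>k<j. dim_row (Bs!k)) + dim_row (Bs!j)
     then Bs!j $$ (i, c - (\<Sum>k<j. dim_row (Bs!k))) else 0)"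
  using assms
proof (induction Bs arbitrary: j c)
  case Nil then show ?case by simp
next
  case (Cons B Bs)
  show ?case
  proof (cases j)
    case 0
    then show ?thesis using Cons.prems
      by (auto simp: Let_def dim_diag_block_mat)
  next
    case (Suc j')
    have s: "(\<Sum>k<Suc j'. dim_row ((B#Bs)!k)) = dim_row B + (\<Sum>k<j'. dim_row (Bs!k))"
      unfolding sum.lessThan_Suc_shift by simp
    have r: "(\<Sum>k<j'. dim_row (Bs!k)) + i < sum_list (map dim_row Bs)"
    proof -
      have "(\<Sum>k<j'. dim_row (Bs!k)) + i < (\<Sum>k<Suc j'. dim_row (Bs!k))" using Cons.prems Suc by simp
      also have "\<dots> \<le> (\<Sum>k<length Bs. dim_row (Bs!k))" using Cons.prems Suc by (intro sum_mono2) auto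
      also have "\<dots> = sum_list (map dim_row Bs)" by (simp add: sum_list_sum_nth atLeast0LessThan)
      finally show ?thesis .
    qed
    have n: "(B#Bs)!Suc j' = Bs!j'" by auto
    show ?thesis
    proof (cases "c < dim_col B")
      case True
      then show ?thesis using Cons.prems[unfolded Suc] r n unfolding Suc s
        by (auto simp: Let_def dim_diag_block_mat)
    next
      case False
      have IH: "diag_block_mat Bs $$ ((\<Sum>k<j'. dim_row (Bs!k)) + i, c - dim_col B) =
    (if (\<Sum>k<j'. dim_row (Bs!k)) \<le> c - dim_col B \<and> c - dim_col B < (\<Sum>k<j'. dim_row (Bs!k)) + dim_row (Bs!j')
     then Bs!j' $$ (i, c - dim_col B - (\<Sum>k<j'. dim_row (Bs!k))) else 0)"
        using Cons.prems False Suc by (intro Cons.IH) auto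
      show ?thesis using Cons.prems[unfolded Suc] False IH r n unfolding Suc s
        by (auto simp: Let_def dim_diag_block_mat)
    qed
  qed
qed

lemma sum_le_lessThan_Suc: "(\<Sum>j\<le>m. f j) = (\<Sum>j<Suc m. f j)"
  by (simp add: lessThan_Suc_atMost)

lemma Zmat_dims:
  "dim_row (Zmat m ns zs) = (\<Sum>j\<le>m. ns j)" "dim_col (Zmat m ns zs) = (\<Sum>j\<le>m. ns j)"
  unfolding Zmat_def dim_diag_block_mat map_map
  by (simp_all del: upt_Suc add: o_def Zblock_def sum_set_upt_conv_sum_list_nat[symmetric] atLeast0LessThan lessThan_Suc_atMost)

lemma Zmat_carrier: "Zmat m ns zs \<in> carrier_mat (\<Sum>j\<le>m. ns j) (\<Sum>j\<le>m. ns j)"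
  using Zmat_dims by (auto intro: carrier_matI)

lemma Zmat_row:
  assumes "j \<le> m" "i < ns j" "c < (\<Sum>j\<le>m. ns j)"
  shows "Zmat m ns zs $$ ((\<Sum>k<j. ns k) + i, c) =
    (if c = (\<Sum>k<j. ns k) + i then zs j else if c + 1 = (\<Sum>k<j. ns k) + i \<and> 0 < i then 1 else 0)"
proof -
  let ?Bs = "map (\<lambda>j. Zblock (ns j) (zs j)) [0..<Suc m]"
  have nth: "\<And>k. k \<le> m \<Longrightarrow> ?Bs ! k = Zblock (ns k) (zs k)"
    by (simp del: upt_Suc add: nth_map)
  have sj: "(\<Sum>k<j. dim_row (?Bs!k)) = (\<Sum>k<j. ns k)"
    using assms(1) by (intro sum.cong) (auto simp: nth Zblock_def simp del: upt_Suc)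
  have tot: "sum_list (map dim_col ?Bs) = (\<Sum>j\<le>m. ns j)"
    by (simp del: upt_Suc add: o_def Zblock_def sum_set_upt_conv_sum_list_nat[symmetric] atLeast0LessThan lessThan_Suc_atMost)
  have sq: "\<forall>B\<in>set ?Bs. dim_col B = dim_row B" by (auto simp: Zblock_def)
  have lenj: "j < length ?Bs" using assms by simp
  have dj: "dim_row (?Bs!j) = ns j" using nth[OF assms(1)] by (simp add: Zblock_def)
  have cl: "c < sum_list (map dim_col ?Bs)" using tot assms by simp
  have "diag_block_mat ?Bs $$ ((\<Sum>k<j. dim_row (?Bs!k)) + i, c) =
    (if (\<Sum>k<j. dim_row (?Bs!k)) \<le> c \<and> c < (\<Sum>k<j. dim_row (?Bs!k)) + dim_row (?Bs!j)
     then ?Bs!j $$ (i, c - (\<Sum>k<j. dim_row (?Bs!k))) else 0)"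
    using assms(2) dj by (intro diag_block_entry[OF sq lenj _ cl]) simp
  then have "Zmat m ns zs $$ ((\<Sum>k<j. ns k) + i, c) = (if (\<Sum>k<j. ns k) \<le> c \<and> c < (\<Sum>k<j. ns k) + ns j
     then Zblock (ns j) (zs j) $$ (i, c - (\<Sum>k<j. ns k)) else 0)"
    unfolding Zmat_def sj nth[OF assms(1)] by (simp add: Zblock_def del: upt_Suc)
  then show ?thesis using assms
    by (auto simp: Zblock_def)
qed

lemma evec_dim: "dim_vec (evec m ns) = (\<Sum>j\<le>m. ns j)"
  by (simp add: evec_def)

lemma evec_val:
  assumes "\<forall>j\<le>m. ns j > 0" "j \<le> m" "i < ns j"
  shows "evec m ns $ ((\<Sum>k<j. ns k) + i) = (if i = 0 then 1 else 0)"
proof -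
  have lt: "(\<Sum>k<j. ns k) + i < (\<Sum>j\<le>m. ns j)"
  proof -
    have "(\<Sum>k<j. ns k) + i < (\<Sum>k<Suc j. ns k)" using assms by simp
    also have "\<dots> \<le> (\<Sum>k<Suc m. ns k)" using assms by (intro sum_mono2) auto
    finally show ?thesis by (simp add: sum_le_lessThan_Suc)
  qed
  have "(\<exists>j'\<le>m. (\<Sum>k<j. ns k) + i = (\<Sum>k<j'. ns k)) \<longleftrightarrow> i = 0"
  proof
    assume "\<exists>j'\<le>m. (\<Sum>k<j. ns k) + i = (\<Sum>k<j'. ns k)"
    then obtain j' where j': "j' \<le> m" "(\<Sum>k<j. ns k) + i = (\<Sum>k<j'. ns k) + 0" by auto
    from block_unique[OF j'(2)] assms j' show "i = 0" by auto
  next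
    assume "i = 0" then show "\<exists>j'\<le>m. (\<Sum>k<j. ns k) + i = (\<Sum>k<j'. ns k)" using assms by auto
  qed
  then show ?thesis using lt unfolding evec_def by auto
qed

lemma Zmat_mult:
  assumes "j \<le> m" "i < ns j" and v: "v \<in> carrier_vec (\<Sum>j\<le>m. ns j)"
  shows "(Zmat m ns zs *\<^sub>v v) $ ((\<Sum>k<j. ns k) + i) =
     zs j * v $ ((\<Sum>k<j. ns k) + i) + (if 0 < i then v $ ((\<Sum>k<j. ns k) + i - 1) else 0)"
proof -
  let ?r = "(\<Sum>k<j. ns k) + i"
  let ?D = "(\<Sum>j\<le>m. ns j)"
  have lt: "?r < ?D"
  proof -
    have "(\<Sum>k<j. ns k) + i < (\<Sum>k<Suc j. ns k)" using assms by simp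
    also have "\<dots> \<le> (\<Sum>k<Suc m. ns k)" using assms by (intro sum_mono2) auto
    finally show ?thesis by (simp add: sum_le_lessThan_Suc)
  qed
  have "(Zmat m ns zs *\<^sub>v v) $ ?r = (\<Sum>c\<in>{0..<?D}. Zmat m ns zs $$ (?r, c) * v $ c)"
    using lt v Zmat_dims[of m ns zs] by (simp add: scalar_prod_def)
  also have "\<dots> = (\<Sum>c\<in>{0..<?D}. (if c = ?r then zs j * v $ c else 0) +
       (if c = ?r - 1 then (if 0 < i then v $ c else 0) else 0))"
    using assms by (intro sum.cong) (auto simp: Zmat_row)
  also have "\<dots> = zs j * v $ ?r + (if 0 < i then v $ (?r - 1) else 0)"
    using lt by (auto simp: sum.distrib)
  finally show ?thesis .
qed

lemma pow_mat_Suc': "A \<in> carrier_mat n n \<Longrightarrow> A ^\<^sub>m Suc k = A * A ^\<^sub>m k"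
proof (induction k)
  case 0 then show ?case by simp
next
  case (Suc k)
  have "A ^\<^sub>m Suc (Suc k) = (A * A ^\<^sub>m k) * A" using Suc by simp
  also have "\<dots> = A * (A ^\<^sub>m k * A)" using Suc.prems by (simp add: assoc_mult_mat[of _ n n _ n _ n])
  finally show ?case by simp
qed

lemma W_coord:
  assumes "\<forall>j\<le>m. ns j > 0" "j \<le> m" "i < ns j"
  shows "(Zmat m ns zs ^\<^sub>m k *\<^sub>v evec m ns) $ ((\<Sum>k<j. ns k) + i) = coeff ([:zs j, 1:] ^ k) i"
  using assms(3)
proof (induction k arbitrary: i)
  case 0
  let ?D = "(\<Sum>j\<le>m. ns j)"
  have e: "evec m ns \<in> carrier_vec ?D" by (simp add: carrier_vecI evec_dim)
  have "(Zmat m ns zs ^\<^sub>m 0 *\<^sub>v evec m ns) = evec m ns" using e Zmat_dims[of m ns zs] by simp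
  then show ?case using evec_val[OF assms(1,2) 0] by simp
next
  case (Suc k)
  let ?D = "(\<Sum>j\<le>m. ns j)"
  let ?Z = "Zmat m ns zs"
  have e: "evec m ns \<in> carrier_vec ?D" by (simp add: carrier_vecI evec_dim)
  have "?Z ^\<^sub>m Suc k *\<^sub>v evec m ns = ?Z *\<^sub>v (?Z ^\<^sub>m k *\<^sub>v evec m ns)"
    using e Zmat_carrier[of m ns zs] by (subst pow_mat_Suc'[OF Zmat_carrier]) (simp add: assoc_mult_mat_vec[of _ ?D ?D _ ?D])
  also have "\<dots> $ ((\<Sum>k<j. ns k) + i) = zs j * coeff ([:zs j, 1:] ^ k) i +
      (if 0 < i then coeff ([:zs j, 1:] ^ k) (i - 1) else 0)"
  proof -
    have c: "?Z ^\<^sub>m k *\<^sub>v evec m ns \<in> carrier_vec ?D"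
      using Zmat_carrier[of m ns zs] e by (meson mult_mat_vec_carrier pow_carrier_mat)
    have "0 < i \<Longrightarrow> (?Z ^\<^sub>m k *\<^sub>v evec m ns) $ ((\<Sum>k<j. ns k) + i - 1) = coeff ([:zs j, 1:] ^ k) (i - 1)"
      using Suc.IH[of "i - 1"] Suc.prems by (simp add: add_diff_eq[symmetric])
    then show ?thesis using Suc.IH[of i] Suc.prems assms by (subst Zmat_mult[OF _ _ c]) auto
  qed
  also have "\<dots> = coeff ([:zs j, 1:] ^ Suc k) i"
    by (cases i) (auto simp: coeff_pCons)
  finally show ?case .
qed

lemma pcompose_power_left': "pcompose (p ^ n) q = (pcompose p q) ^ n"
  by (induct n) (simp_all add: pcompose_mult, metis one_pCons pcompose_const)

lemma pcompose_monom': "pcompose (monom c k) q = smult c (q ^ k)"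
  by (simp add: monom_altdef pcompose_smult pcompose_power_left' pcompose_pCons)

lemma taylor_dvd:
  fixes z :: complex
  assumes "[:-z,1:]^N dvd p" "i < N" shows "coeff (pcompose p [:z,1:]) i = 0"
proof -
  obtain r where p: "p = [:-z,1:]^N * r" using assms(1) by (auto elim: dvdE)
  have "pcompose p [:z,1:] = monom 1 N * pcompose r [:z,1:]"
    unfolding p pcompose_mult pcompose_power_left' by (simp add: pcompose_pCons monom_altdef)
  then show ?thesis using assms(2) by (simp add: coeff_monom_mult)
qed

lemma dvd_taylor:
  fixes z :: complex
  assumes "\<forall>i<N. coeff (pcompose p [:z,1:]) i = 0" shows "[:-z,1:]^N dvd p"
proof -
  let ?r = "pcompose p [:z,1:]"
  have r: "?r = monom 1 N * poly_shift N ?r"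
    by (rule poly_eqI) (use assms in \<open>auto simp: coeff_monom_mult coeff_poly_shift\<close>)
  have "p = pcompose ?r [:-z,1:]"
    by (simp add: pcompose_assoc[symmetric] pcompose_pCons)
  also have "\<dots> = [:-z,1:]^N * pcompose (poly_shift N ?r) [:-z,1:]"
    by (subst r) (simp add: pcompose_mult monom_altdef pcompose_power_left' pcompose_pCons)
  finally show ?thesis by (rule dvdI)
qed

lemma coprime_lin:
  fixes a b :: complex
  assumes "a \<noteq> b" shows "coprime [:-a,1:] [:-b,1:]"
proof (rule coprimeI)
  fix c assume "c dvd [:-a,1:]" "c dvd [:-b,1:]"
  then have "c dvd [:-a,1:] - [:-b,1:]" by (rule dvd_diff)
  moreover have "[:-a,1:] - [:-b,1:] = [:b - a:]" by simp
  moreover have "is_unit [:b - a:]" using assms by (simp add: is_unit_const_poly_iff dvd_field_iff)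
  ultimately show "is_unit c" using dvd_unit_imp_unit by metis
qed

lemma prod_dvd:
  fixes zs :: "nat \<Rightarrow> complex"
  assumes "inj_on zs {0..m}" "\<forall>j\<le>m. [:-zs j,1:]^(ns j) dvd p"
  shows "(\<Prod>j\<le>m. [:-zs j,1:]^(ns j)) dvd p"
  using assms
proof (induction m)
  case 0 then show ?case by simp
next
  case (Suc m)
  have inj: "inj_on zs {0..m}" using Suc.prems(1) by (rule inj_on_subset) auto
  have IH: "(\<Prod>j\<le>m. [:-zs j,1:]^(ns j)) dvd p" using Suc.IH inj Suc.prems(2) by auto
  have cop: "coprime (\<Prod>j\<le>m. [:-zs j,1:]^(ns j)) ([:-zs (Suc m),1:]^(ns (Suc m)))"
  proof (rule prod_coprime_left)
    fix j assume "j \<in> {..m}"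
    then have "zs j \<noteq> zs (Suc m)" using Suc.prems(1) by (auto dest: inj_onD)
    then show "coprime ([:-zs j,1:]^(ns j)) ([:-zs (Suc m),1:]^(ns (Suc m)))"
      using coprime_lin by simp
  qed
  show ?case unfolding prod.atMost_Suc using IH Suc.prems(2) cop by (intro divides_mult) auto
qed

definition Qpoly :: "nat \<Rightarrow> (nat \<Rightarrow> nat) \<Rightarrow> (nat \<Rightarrow> complex) \<Rightarrow> complex poly" where
  "Qpoly m ns zs = (\<Prod>j\<le>m. [:-zs j,1:]^(ns j))"

lemma degree_Qpoly: "degree (Qpoly m ns zs) = (\<Sum>j\<le>m. ns j)"
  unfolding Qpoly_def
  by (subst degree_prod_eq_sum_degree) (auto simp: degree_power_eq)

lemma Qpoly_nz: "Qpoly m ns zs \<noteq> 0"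
  unfolding Qpoly_def by (auto)

lemma indep_poly:
  fixes zs :: "nat \<Rightarrow> complex"
  assumes "inj_on zs {0..m}" "\<forall>j\<le>m. \<forall>i<ns j. coeff (pcompose p [:zs j,1:]) i = 0"
    "degree p < (\<Sum>j\<le>m. ns j)"
  shows "p = 0"
proof (rule ccontr)
  assume p: "p \<noteq> 0"
  have "Qpoly m ns zs dvd p" unfolding Qpoly_def
    using assms by (intro prod_dvd allI impI dvd_taylor) auto
  from dvd_imp_degree_le[OF this p] show False using assms(3) degree_Qpoly[of m ns zs] by simp
qed

lemma Qpoly_taylor:
  assumes "j \<le> m" "i < ns j" shows "coeff (pcompose (Qpoly m ns zs) [:zs j,1:]) i = 0"
proof -
  have "[:-zs j,1:]^(ns j) dvd Qpoly m ns zs" unfolding Qpoly_def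
    using assms(1) by (intro dvd_prodI) auto
  then show ?thesis using assms(2) by (rule taylor_dvd)
qed

lemma Qpoly_coeff0:
  assumes "zs 0 = 0" "ns 0 > 0" shows "coeff (Qpoly m ns zs) 0 = 0"
  using Qpoly_taylor[of 0 m 0 ns zs] assms by (simp add: pcompose_pCons)

lemma Qpoly_lead: "coeff (Qpoly m ns zs) (\<Sum>j\<le>m. ns j) = 1"
proof -
  have "lead_coeff (Qpoly m ns zs) = 1" unfolding Qpoly_def
    by (simp add: lead_coeff_prod lead_coeff_power)
  then show ?thesis using degree_Qpoly by metis
qed

lemma W_sum:
  assumes "\<forall>j\<le>m. ns j > 0" "j \<le> m" "i < ns j"
  shows "(\<Sum>k<K. f k * (Zmat m ns zs ^\<^sub>m k *\<^sub>v evec m ns) $ ((\<Sum>k<j. ns k) + i))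
     = coeff (pcompose (\<Sum>k<K. monom (f k) k) [:zs j, 1:]) i"
  using assms by (simp add: W_coord pcompose_sum pcompose_monom' coeff_sum)

lemma Vmat_dims: "dim_row (Vmat l m ns zs t) = l * (\<Sum>j\<le>m. ns j)" "dim_col (Vmat l m ns zs t) = l * t"
  unfolding Vmat_def Let_def evec_dim by simp_all

lemma Nmat_dims: "dim_row (Nmat l ts t) = l * t" "dim_col (Nmat l ts t) = (\<Sum>i<l. ts i)"
  unfolding Nmat_def by simp_all

lemma V_entry:
  assumes "l > 0" "r < l * (\<Sum>j\<le>m. ns j)" "c < l * t"
  shows "Vmat l m ns zs t $$ (r, c) = (if r mod l = c mod l
     then (Zmat m ns zs ^\<^sub>m (c div l + 1) *\<^sub>v evec m ns) $ (r div l) else 0)"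
proof -
  let ?D = "\<Sum>j\<le>m. ns j"
  have rd: "r div l < ?D" using assms by (simp add: less_mult_imp_div_less mult.commute)
  have cm: "c mod l < l" using assms by simp
  show ?thesis
    unfolding Vmat_def Let_def evec_dim using assms rd cm
    by (simp add: kron_def mat_of_cols_index mult.commute)
qed

lemma N_entry:
  assumes "l > 0" "c < l * t" "c2 < (\<Sum>i<l. ts i)"
  shows "Nmat l ts t $$ (c, c2) = (if c div l < ts (c mod l) \<and> c2 = (\<Sum>i<c mod l. ts i) + c div l then 1 else 0)"
proof -
  have cm: "c mod l < l" using assms by simp
  show ?thesis unfolding Nmat_def Nk_def using assms cm by auto
qed



lemma block_lt: "(a0::nat) < l \<Longrightarrow> k0 < (ts a0::nat) \<Longrightarrow> (\<Sum>i<a0. ts i) + k0 < (\<Sum>i<l. ts i)"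
proof -
  assume h: "a0 < l" "k0 < ts a0"
  have "(\<Sum>i<a0. ts i) + k0 < (\<Sum>i<Suc a0. ts i)" using h by simp
  also have "\<dots> \<le> (\<Sum>i<l. ts i)" using h by (intro sum_mono2) auto
  finally show ?thesis .
qed

lemma VN_entry:
  assumes "l > 0" "r < l * (\<Sum>j\<le>m. ns j)" "a0 < l" "k0 < ts a0" "ts a0 \<le> t"
  shows "(Vmat l m ns zs t * Nmat l ts t) $$ (r, (\<Sum>i<a0. ts i) + k0) =
    (if r mod l = a0 then (Zmat m ns zs ^\<^sub>m (k0 + 1) *\<^sub>v evec m ns) $ (r div l) else 0)"
proof -
  let ?c = "(\<Sum>i<a0. ts i) + k0"
  let ?cz = "k0 * l + a0"
  let ?R = "(if r mod l = a0 then (Zmat m ns zs ^\<^sub>m (k0 + 1) *\<^sub>v evec m ns) $ (r div l) else 0)"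
  have c: "?c < (\<Sum>i<l. ts i)" using block_lt[of a0 l k0 ts] assms by simp
  have "?cz < (k0 + 1) * l" using assms by simp
  also have "\<dots> \<le> t * l" using assms by (intro mult_right_mono) auto
  finally have c0: "?cz < l * t" by (simp add: mult.commute)
  have m0: "?cz mod l = a0" "?cz div l = k0" using assms by auto
  have "(Vmat l m ns zs t * Nmat l ts t) $$ (r, ?c) =
     (\<Sum>c'\<in>{0..<l * t}. Vmat l m ns zs t $$ (r, c') * Nmat l ts t $$ (c', ?c))"
  proof -
    have r: "r < dim_row (Vmat l m ns zs t)" using assms by (simp add: Vmat_dims)
    have cc: "?c < dim_col (Nmat l ts t)" using c by (simp add: Nmat_dims)
    have "(Vmat l m ns zs t * Nmat l ts t) $$ (r, ?c) = row (Vmat l m ns zs t) r \<bullet> col (Nmat l ts t) ?c"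
      using index_mult_mat(1)[OF r cc] .
    also have "\<dots> = (\<Sum>c'\<in>{0..<l * t}. row (Vmat l m ns zs t) r $ c' * col (Nmat l ts t) ?c $ c')"
      unfolding scalar_prod_def by (simp add: Nmat_dims)
    also have "\<dots> = (\<Sum>c'\<in>{0..<l * t}. Vmat l m ns zs t $$ (r, c') * Nmat l ts t $$ (c', ?c))"
      using r cc by (intro sum.cong) (auto simp: Vmat_dims Nmat_dims)
    finally show ?thesis .
  qed
  also have "\<dots> = (\<Sum>c'\<in>{0..<l * t}. if c' = ?cz then ?R else 0)"
  proof (rule sum.cong[OF refl])
    fix c' assume "c' \<in> {0..<l * t}"
    then have c': "c' < l * t" by simp
    show "Vmat l m ns zs t $$ (r, c') * Nmat l ts t $$ (c', ?c) = (if c' = ?cz then ?R else 0)"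
    proof (cases "c' = ?cz")
      case True
      have "Nmat l ts t $$ (c', ?c) = (if c' div l < ts (c' mod l) \<and> ?c = (\<Sum>i<c' mod l. ts i) + c' div l then 1 else 0)"
        using N_entry[OF assms(1) c' c] .
      also have "\<dots> = 1" using True m0 assms by simp
      finally have "Nmat l ts t $$ (c', ?c) = 1" .
      moreover have "Vmat l m ns zs t $$ (r, c') = ?R" using True assms c0 m0 by (simp add: V_entry)
      ultimately show ?thesis using True by simp
    next
      case False
      have "Nmat l ts t $$ (c', ?c) = 0"
      proof (rule ccontr)
        assume "Nmat l ts t $$ (c', ?c) \<noteq> 0"
        then have h: "c' div l < ts (c' mod l)" "?c = (\<Sum>i<c' mod l. ts i) + c' div l"
          using N_entry[OF assms(1) c' c] by (auto split: if_splits)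
        from block_unique[OF h(2) assms(4) h(1)] have "c' mod l = a0" "c' div l = k0" by auto
        then have "c' = ?cz" using div_mult_mod_eq[of c' l] by simp
        then show False using False by simp
      qed
      then show ?thesis using False by simp
    qed
  qed
  also have "\<dots> = ?R" using c0 by simp
  finally show ?thesis .
qed

lemma sum_window:
  assumes "b + K \<le> (M::nat)" "\<And>c. c < M \<Longrightarrow> c < b \<or> b + K \<le> c \<Longrightarrow> g c = (0::'a::comm_monoid_add)"
  shows "(\<Sum>c\<in>{0..<M}. g c) = (\<Sum>k<K. g (b + k))"
proof -
  have "(\<Sum>c\<in>{0..<M}. g c) = (\<Sum>c\<in>{b..<b+K}. g c)"
    using assms by (intro sum.mono_neutral_right) auto
  also have "\<dots> = (\<Sum>k\<in>{0..<K}. g (k + b))"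
    using sum.shift_bounds_nat_ivl[of g 0 b K] by (simp add: add.commute)
  finally show ?thesis by (simp add: atLeast0LessThan add.commute)
qed

lemma coverage:
  "(r::nat) < (\<Sum>j\<le>(m::nat). ns j) \<Longrightarrow> \<exists>j\<le>m. \<exists>i<ns j. r = (\<Sum>k<j. ns k) + i"
  using block_decomp[of r ns "Suc m"] by (auto simp: sum_le_lessThan_Suc less_Suc_eq_le)

lemma W_first:
  assumes "\<forall>j\<le>m. ns j > 0" "zs 0 = 0"
  shows "(Zmat m ns zs ^\<^sub>m (Suc k) *\<^sub>v evec m ns) $ 0 = 0"
  using W_coord[of m ns 0 0 zs "Suc k"] assms by (simp add: coeff_0_power)

lemma indep_W:
  assumes "\<forall>j\<le>m. ns j > 0" "inj_on zs {0..m}"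
    "\<forall>r<(\<Sum>j\<le>m. ns j). (\<Sum>k<(\<Sum>j\<le>m. ns j). f k * (Zmat m ns zs ^\<^sub>m k *\<^sub>v evec m ns) $ r) = 0"
    "k < (\<Sum>j\<le>m. ns j)"
  shows "f k = 0"
proof -
  let ?D = "\<Sum>j\<le>m. ns j"
  let ?p = "\<Sum>k<?D. monom (f k) k"
  have cp: "coeff ?p i = (if i < ?D then f i else 0)" for i
    by (simp add: coeff_sum coeff_monom)
  have "degree ?p \<le> ?D - 1" by (rule degree_le) (auto simp: cp)
  then have dg: "degree ?p < ?D" using assms(4) by linarith
  have "\<forall>j\<le>m. \<forall>i<ns j. coeff (pcompose ?p [:zs j,1:]) i = 0"
  proof (intro allI impI)
    fix j i assume ji: "j \<le> m" "i < ns j"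
    have lt: "(\<Sum>k<j. ns k) + i < ?D"
    proof -
      have "(\<Sum>k<j. ns k) + i < (\<Sum>k<Suc j. ns k)" using ji by simp
      also have "\<dots> \<le> (\<Sum>k<Suc m. ns k)" using ji by (intro sum_mono2) auto
      finally show ?thesis by (simp add: sum_le_lessThan_Suc)
    qed
    show "coeff (pcompose ?p [:zs j,1:]) i = 0"
      using W_sum[OF assms(1) ji, where K="?D" and f=f and zs=zs, symmetric] assms(3) lt by simp
  qed
  then have "?p = 0" using indep_poly[OF assms(2) _ dg] by blast
  then show ?thesis using cp[of k] assms(4) by simp
qed

lemma dep_W:
  assumes "\<forall>j\<le>m. ns j > 0" "r < (\<Sum>j\<le>m. ns j)"
  shows "(\<Sum>k<Suc (\<Sum>j\<le>m. ns j). coeff (Qpoly m ns zs) k * (Zmat m ns zs ^\<^sub>m k *\<^sub>v evec m ns) $ r) = 0"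
proof -
  let ?D = "\<Sum>j\<le>m. ns j"
  obtain j i where ji: "j \<le> m" "i < ns j" "r = (\<Sum>k<j. ns k) + i" using coverage[OF assms(2)] by blast
  have "(\<Sum>k<Suc ?D. monom (coeff (Qpoly m ns zs) k) k) = Qpoly m ns zs"
    unfolding lessThan_Suc_atMost by (rule poly_as_sum_of_monoms') (simp add: degree_Qpoly)
  then show ?thesis
    using W_sum[OF assms(1) ji(1,2), where K="Suc ?D" and f="coeff (Qpoly m ns zs)" and zs=zs] Qpoly_taylor[of j m i ns zs] ji ji(3)
    by simp
qed

theorem lemma3:
  fixes l m n t :: nat and ns :: "nat \<Rightarrow> nat" and zs :: "nat \<Rightarrow> complex" and ts :: "nat \<Rightarrow> nat"
  assumes "l \<ge> 1"
    and "\<forall>j\<le>m. ns j > 0"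
    and "n = (\<Sum>j\<le>m. ns j) - 1" and "n \<ge> 1"
    and "zs 0 = 0" and "inj_on zs {0..m}" and "\<forall>j\<le>m. norm (zs j) < 1"
    and "\<forall>i<l. ts i > 0" and "(\<Sum>i<l. ts i) = n * l"
    and "t = Max (ts ` {..<l})"
  shows "let VN = Vmat l m ns zs t * Nmat l ts t;
             L = mat (l * n) (l * n) (\<lambda>(i,j). VN $$ (i + l, j))
         in dim_row VN = l * (n + 1) \<and> dim_col VN = l * n
            \<and> (\<forall>i<l. \<forall>j<l * n. VN $$ (i, j) = 0)
            \<and> (invertible_mat L \<longleftrightarrow> (\<forall>i<l. ts i = n))"
proof -
  let ?D = "\<Sum>j\<le>m. ns j"
  let ?W = "\<lambda>k. Zmat m ns zs ^\<^sub>m k *\<^sub>v evec m ns"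
  let ?S = "\<lambda>a. \<Sum>i<a. ts i"
  let ?VN = "Vmat l m ns zs t * Nmat l ts t"
  let ?L = "mat (l * n) (l * n) (\<lambda>(i,j). ?VN $$ (i + l, j))"
  have l0: "l > 0" using assms(1) by simp
  have "ns 0 \<le> ?D" by (rule member_le_sum) auto
  then have D: "?D = n + 1" using assms(2,3) by auto
  have tmax: "ts i \<le> t" if "i < l" for i
    unfolding assms(10) using that by (intro Max_ge) auto
  have tsum: "(\<Sum>i<l. ts i) = l * n" using assms(9) by simp
  have dimr: "dim_row ?VN = l * (n + 1)" using D by (simp add: Vmat_dims)
  have dimc: "dim_col ?VN = l * n" using tsum by (simp add: Nmat_dims)
  have entry: "?VN $$ (r, ?S a0 + k0) = (if r mod l = a0 then ?W (k0 + 1) $ (r div l) else 0)"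
    if "r < l * (n + 1)" "a0 < l" "k0 < ts a0" for r a0 k0
    using VN_entry[OF l0, where r=r and m=m and ns=ns and ?a0.0=a0 and ?k0.0=k0 and ts=ts and t=t and zs=zs] that tmax D by simp
  have W0: "?W (Suc k) $ 0 = 0" for k using W_first[of m ns zs k] assms(2,5) by blast
  have zero: "\<forall>i<l. \<forall>j<l * n. ?VN $$ (i, j) = 0"
  proof (intro allI impI)
    fix i j assume ij: "i < l" "j < l * n"
    then obtain a0 k0 where a: "a0 < l" "k0 < ts a0" "j = ?S a0 + k0"
      using block_decomp[of j ts l] tsum by auto
    have "i < l * (n + 1)" using ij by (simp add: algebra_simps)
    then show "?VN $$ (i, j) = 0" using entry[of i a0 k0] a ij W0 by simp
  qed
  have Lc: "?L \<in> carrier_mat (l * n) (l * n)" by simp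
  have Lentry: "?L $$ (i, ?S a0 + k0) = (if i mod l = a0 then ?W (k0 + 1) $ (i div l + 1) else 0)"
    if "i < l * n" "a0 < l" "k0 < ts a0" for i a0 k0
  proof -
    have c: "?S a0 + k0 < l * n" using block_lt[of a0 l k0 ts] that tsum by simp
    have "i + l < l * (n + 1)" using that by (simp add: algebra_simps)
    then have "?L $$ (i, ?S a0 + k0) = (if (i + l) mod l = a0 then ?W (k0 + 1) $ ((i + l) div l) else 0)"
      using c that entry by simp
    also have "(i + l) mod l = i mod l" by simp
    also have "(i + l) div l = i div l + 1" using l0 by simp
    finally show ?thesis .
  qed
  have Mv: "(?L *\<^sub>v v) $ i = (\<Sum>c\<in>{0..<l * n}. ?L $$ (i, c) * v $ c)"
    if "v \<in> carrier_vec (l * n)" "i < l * n" for v i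
    using that by (simp add: scalar_prod_def)
  have main: "invertible_mat ?L \<longleftrightarrow> (\<forall>i<l. ts i = n)"
  proof
    assume inv: "invertible_mat ?L"
    show "\<forall>i<l. ts i = n"
    proof (rule ccontr)
      assume "\<not> (\<forall>i<l. ts i = n)"
      then obtain i0 where i0: "i0 < l" "ts i0 \<noteq> n" by auto
      have "\<exists>a<l. ts a > n"
      proof (rule ccontr)
        assume "\<not> (\<exists>a<l. ts a > n)"
        then have le: "\<forall>i\<in>{..<l}. ts i \<le> n" by auto
        have "\<exists>i\<in>{..<l}. ts i < n" using i0 le by force
        then have "(\<Sum>i<l. ts i) < (\<Sum>i<l. n)" using le by (intro sum_strict_mono_ex1) auto
        then show False using tsum by simp
      qed
      then obtain a where a: "a < l" "ts a > n" by auto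
      let ?Q = "Qpoly m ns zs"
      define v where "v = vec (l * n) (\<lambda>c. if ?S a \<le> c \<and> c < ?S a + ?D then coeff ?Q (c - ?S a + 1) else 0)"
      have win: "?S a + ?D \<le> l * n"
      proof -
        have "?S a + ?D \<le> ?S a + ts a" using a D by simp
        also have "\<dots> = (\<Sum>i<Suc a. ts i)" by simp
        also have "\<dots> \<le> (\<Sum>i<l. ts i)" using a by (intro sum_mono2) auto
        finally show ?thesis using tsum by simp
      qed
      have vc: "v \<in> carrier_vec (l * n)" unfolding v_def by simp
      have "v $ (?S a + n) = 1" using win D Qpoly_lead[of m ns zs] unfolding v_def by simp
      then have vnz: "v \<noteq> 0\<^sub>v (l * n)" using win D by auto
      have "?L *\<^sub>v v = 0\<^sub>v (l * n)"
      proof (rule eq_vecI)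
        fix i assume "i < dim_vec (0\<^sub>v (l * n) :: complex vec)"
        then have i: "i < l * n" by simp
        have "(?L *\<^sub>v v) $ i = (\<Sum>k<?D. ?L $$ (i, ?S a + k) * v $ (?S a + k))"
          unfolding Mv[OF vc i] by (rule sum_window[OF win]) (auto simp: v_def)
        also have "\<dots> = (\<Sum>k<?D. (if i mod l = a then coeff ?Q (k + 1) * ?W (k + 1) $ (i div l + 1) else 0))"
        proof (rule sum.cong[OF refl])
          fix k assume "k \<in> {..<?D}"
          then have k: "k < ?D" by simp
          then have "k < ts a" using a D by simp
          then show "?L $$ (i, ?S a + k) * v $ (?S a + k) = (if i mod l = a then coeff ?Q (k + 1) * ?W (k + 1) $ (i div l + 1) else 0)"
            using Lentry[OF i a(1)] k win unfolding v_def by auto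
        qed
        also have "\<dots> = 0"
        proof (cases "i mod l = a")
          case True
          have "i div l < n" using less_mult_imp_div_less[of i n l] i by (simp add: mult.commute)
          then have r: "i div l + 1 < ?D" using D by simp
          have "(\<Sum>k<Suc ?D. coeff ?Q k * ?W k $ (i div l + 1)) = 0" using dep_W[OF assms(2) r] .
          then have "(\<Sum>k<?D. coeff ?Q (Suc k) * ?W (Suc k) $ (i div l + 1)) = 0"
            unfolding sum.lessThan_Suc_shift using Qpoly_coeff0[where zs=zs and ns=ns and m=m] assms(2,5) by simp
          then show ?thesis using True by simp
        qed simp
        finally show "(?L *\<^sub>v v) $ i = 0\<^sub>v (l * n) $ i" using i by simp
      qed simp
      then show False using inv vc vnz invertible_iff_ker[OF Lc] by blast
    qed
  next
    assume all: "\<forall>i<l. ts i = n"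
    have Sa: "?S a = a * n" if "a \<le> l" for a
    proof -
      have "?S a = (\<Sum>i<a. n)" using that all by (intro sum.cong) auto
      then show ?thesis by simp
    qed
    have Lentry2: "?L $$ (i, c) = (if i mod l = c div n then ?W (c mod n + 1) $ (i div l + 1) else 0)"
      if "i < l * n" "c < l * n" for i c
    proof -
      have cd: "c div n < l" using that by (simp add: less_mult_imp_div_less mult.commute)
      have cm: "c mod n < ts (c div n)" using all cd assms(4) by simp
      have "?S (c div n) + c mod n = c" using Sa[of "c div n"] cd by simp
      then show ?thesis using Lentry[OF that(1) cd cm] by simp
    qed
    show "invertible_mat ?L"
      unfolding invertible_iff_ker[OF Lc]
    proof (intro allI impI)
      fix v :: "complex vec" assume vc: "v \<in> carrier_vec (l * n)" and Lv: "?L *\<^sub>v v = 0\<^sub>v (l * n)"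
      have key: "v $ (a * n + k) = 0" if a: "a < l" and k: "k < n" for a k
      proof -
        define f where "f = (\<lambda>k. if k = 0 then 0 else v $ (a * n + (k - 1)))"
        have sh: "(\<Sum>k<?D. f k * ?W k $ r) = (\<Sum>k<n. v $ (a * n + k) * ?W (k + 1) $ r)" for r
          unfolding D Suc_eq_plus1[symmetric] sum.lessThan_Suc_shift f_def by (simp del: pow_mat.simps)
        have "\<forall>r<?D. (\<Sum>k<?D. f k * ?W k $ r) = 0"
        proof (intro allI impI)
          fix r assume r: "r < ?D"
          show "(\<Sum>k<?D. f k * ?W k $ r) = 0"
          proof (cases r)
            case 0
            then show ?thesis unfolding sh using W0 by simp
          next
            case (Suc p)
            have p: "p < n" using r D Suc by simp
            have "p * l + a < (p + 1) * l" using a by simp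
            also have "\<dots> \<le> n * l" using p by (intro mult_right_mono) auto
            finally have i: "p * l + a < l * n" by (simp add: mult.commute)
            have im: "(p * l + a) mod l = a" "(p * l + a) div l = p" using a by auto
            have "0 = (?L *\<^sub>v v) $ (p * l + a)" using Lv i by simp
            also have "\<dots> = (\<Sum>k<n. ?L $$ (p * l + a, a * n + k) * v $ (a * n + k))"
              unfolding Mv[OF vc i]
            proof (rule sum_window)
              show "a * n + n \<le> l * n" using a using mult_le_mono1[of "Suc a" l n] by simp
            next
              fix c assume c: "c < l * n" "c < a * n \<or> a * n + n \<le> c"
              have "c = c div n * n + c mod n" by simp
              moreover have "c mod n < n" using assms(4) by simp
              ultimately have "c div n \<noteq> a"
              proof -
                have "c mod n < n" using assms(4) by simp
                show "c div n \<noteq> a"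
                proof
                  assume h: "c div n = a"
                  have "a * n + c mod n = c" using div_mult_mod_eq[of c n, unfolded h] .
                  then show False using c(2) \<open>c mod n < n\<close> by linarith
                qed
              qed
              then show "?L $$ (p * l + a, c) * v $ c = 0" using Lentry2[OF i c(1)] im by simp
            qed
            also have "\<dots> = (\<Sum>k<n. v $ (a * n + k) * ?W (k + 1) $ r)"
            proof (rule sum.cong[OF refl])
              fix k' assume "k' \<in> {..<n}"
              then have k': "k' < n" by simp
              have c: "a * n + k' < l * n"
              proof -
                have "a * n + k' < a * n + n" using k' by simp
                also have "\<dots> \<le> l * n" using a using mult_le_mono1[of "Suc a" l n] by simp
                finally show ?thesis .
              qed
              show "?L $$ (p * l + a, a * n + k') * v $ (a * n + k') = v $ (a * n + k') * ?W (k' + 1) $ r"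
                using Lentry2[OF i c] im k' Suc by simp
            qed
            finally show ?thesis unfolding sh by simp
          qed
        qed
        from indep_W[OF assms(2,6) this, of "k + 1"] have "f (k + 1) = 0" using k D by simp
        then show ?thesis unfolding f_def by simp
      qed
      show "v = 0\<^sub>v (l * n)"
      proof (rule eq_vecI)
        fix c assume "c < dim_vec (0\<^sub>v (l * n) :: complex vec)"
        then have c: "c < l * n" by simp
        have cd: "c div n < l" using c by (simp add: less_mult_imp_div_less mult.commute)
        have "v $ c = 0" using key[OF cd, of "c mod n"] assms(4) by simp
        then show "v $ c = 0\<^sub>v (l * n) $ c" using c by simp
      qed (use vc in simp)
    qed
  qed
  show ?thesis unfolding Let_def using dimr dimc zero main by blast
qed

end
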